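(* Let $K\ge2$ and $\theta=K$. Let $V_1,\dots,V_{K-1}$ be independent with $V_i\sim\mathrm{Beta}(\frac\theta K+1,(K-i)\frac\theta K)=\mathrm{Beta}(2,\theta-i)$, and set $Y_1^K=V_1$, $Y_i^K=(1-V_1)\cdots(1-V_{i-1})V_i$ for $2\le i\le K-1$. Fix $r\ge1$. Then, as $\theta=K\to\infty$, the family of laws of $(Y_1^K,\dots,Y_r^K)$ satisfies an LDP on $\Delta_r=\{(y_1,\dots,y_r): y_k\ge0,\ \sum_{k=1}^r y_k\le1\}$ with speed $\theta$ and rate function $$S_r(y_1,\dots,y_r)=\begin{cases}\log\dfrac{1}{1-\sum_{k=1}^r y_k},&\sum_{k=1}^r y_k<1,\\ \infty,&\text{otherwise.}\end{cases}$$
   Context: $(Y_1^K,\dots,Y_{K-1}^K)$ is the size-biased sampling of a symmetric $\mathrm{Dirichlet}(\theta/K,\dots,\theta/K)$ distribution. *)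

theory Defs
  imports "HOL-Probability.Probability"
begin

definition beta_measure :: "real \<Rightarrow> real \<Rightarrow> real measure" where
  "beta_measure a b = density lborel
     (\<lambda>x. ennreal (indicator {0<..<1} x * x powr (a - 1) * (1 - x) powr (b - 1) / Beta a b))"

(* V_i, i = 1..K-1 (stored at 0-based index j = i-1), independent, V_i ~ Beta(theta/K+1, (K-i) theta/K)
   with theta = K, i.e. Beta(2, K - i). *)
definition stick_space :: "nat \<Rightarrow> (nat \<Rightarrow> real) measure" where
  "stick_space K = PiM {..<K-1}
     (\<lambda>j. beta_measure (real K / real K + 1) ((real K - real (j + 1)) * (real K / real K)))"

(* (Y_1^K, ..., Y_r^K) as a vector y :: nat \<Rightarrow> real with y j = Y_{j+1}^K for j < r, y j = 0 for j \<ge> r.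
   Y_{j+1} = (1 - V_1)...(1 - V_j) V_{j+1}. *)
definition Yvec :: "nat \<Rightarrow> (nat \<Rightarrow> real) \<Rightarrow> (nat \<Rightarrow> real)" where
  "Yvec r v = (\<lambda>j. if j < r then (\<Prod>l<j. 1 - v l) * v j else 0)"

definition Ylaw :: "nat \<Rightarrow> nat \<Rightarrow> (nat \<Rightarrow> real) measure" where
  "Ylaw r K = distr (stick_space K) borel (Yvec r)"

(* Delta_r, embedded in nat \<Rightarrow> real (coordinates \<ge> r are 0); the product topology
   restricted to this set is the Euclidean topology of R^r *)
definition Delta :: "nat \<Rightarrow> (nat \<Rightarrow> real) set" where
  "Delta r = {y. (\<forall>j<r. 0 \<le> y j) \<and> (\<forall>j\<ge>r. y j = 0) \<and> (\<Sum>j<r. y j) \<le> 1}"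

definition S_rate :: "nat \<Rightarrow> (nat \<Rightarrow> real) \<Rightarrow> ereal" where
  "S_rate r y = (if (\<Sum>j<r. y j) < 1 then ereal (ln (1 / (1 - (\<Sum>j<r. y j)))) else \<infinity>)"

definition scaled_log_prob :: "real \<Rightarrow> 'a measure \<Rightarrow> 'a set \<Rightarrow> ereal" where
  "scaled_log_prob s M A = (if measure M A = 0 then - \<infinity> else ereal (ln (measure M A) / s))"

definition LDP :: "(nat \<Rightarrow> 'a::topological_space measure) \<Rightarrow> (nat \<Rightarrow> real) \<Rightarrow> 'a set
                    \<Rightarrow> ('a \<Rightarrow> ereal) \<Rightarrow> bool" where
  "LDP \<mu> s E I \<longleftrightarrow>
     (\<forall>x\<in>E. 0 \<le> I x) \<and>
     (\<forall>c::real. closedin (top_of_set E) {x\<in>E. I x \<le> ereal c}) \<and>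
     (\<forall>\<Gamma>. \<Gamma> \<in> sets borel \<and> \<Gamma> \<subseteq> E \<longrightarrow>
        - (INF x\<in>(top_of_set E) interior_of \<Gamma>. I x)
            \<le> liminf (\<lambda>n. scaled_log_prob (s n) (\<mu> n) \<Gamma>) \<and>
        limsup (\<lambda>n. scaled_log_prob (s n) (\<mu> n) \<Gamma>)
            \<le> - (INF x\<in>(top_of_set E) closure_of \<Gamma>. I x))"

end

theory Submission
  imports Defs "HOL-Real_Asymp.Real_Asymp"
begin


lemma Beta_2: fixes b :: real assumes "b > 0" shows "Beta 2 b = 1 / (b * (b + 1))"
proof -
  have nz: "b \<notin> \<int>\<^sub>\<le>\<^sub>0" using assms by (auto elim!: nonpos_Ints_cases)
  have g0: "Gamma b \<noteq> 0" using nz by (simp add: Gamma_eq_zero_iff)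
  have "(1 + b) * Beta (1 + 1) b = 1 * Beta 1 b"
    using Beta_plus1_left[of 1 b] by simp
  moreover have "Beta 1 b = 1 / b"
    unfolding Beta_def using Gamma_plus1[OF nz] g0 assms by (simp add: add.commute)
  ultimately have h0: "(1 + b) * Beta 2 b = 1 / b" by simp
  have h: "Beta 2 b * (b * (b + 1)) = 1" using h0 assms by (simp add: field_simps)
  have "b * (b + 1) \<noteq> 0" using assms by simp
  then show ?thesis using h by (simp add: eq_divide_eq)
qed



definition bdens :: "real \<Rightarrow> real \<Rightarrow> real" where
  "bdens b x = indicator {0<..<1} x * x powr (2 - 1) * (1 - x) powr (b - 1) / Beta 2 b"

lemma beta_measure_2: "beta_measure 2 b = density lborel (\<lambda>x. ennreal (bdens b x))"
  unfolding beta_measure_def bdens_def by simp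

lemma bdens_meas[measurable]: "bdens b \<in> borel_measurable borel"
  unfolding bdens_def by measurable

lemma bdens_nonneg: "b > 0 \<Longrightarrow> bdens b x \<ge> 0"
  unfolding bdens_def using Beta_2[of b] by (auto simp: indicator_def intro!: divide_nonneg_pos)

lemma bdens_in: "b > 0 \<Longrightarrow> 0 < x \<Longrightarrow> x < 1 \<Longrightarrow> bdens b x = x * (1 - x) powr (b - 1) * (b * (b + 1))"
  unfolding bdens_def using Beta_2[of b] by (simp add: indicator_def)

lemma bdens_out: "\<not> (0 < x \<and> x < 1) \<Longrightarrow> bdens b x = 0"
  unfolding bdens_def by (simp add: indicator_def)

lemma beta_prob: assumes b: "b > 0" shows "prob_space (beta_measure 2 b)"
proof
  have B: "Beta 2 b > 0" using Beta_2[OF b] b by simp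
  have hi: "((\<lambda>x. x powr (2 - 1) * (1 - x) powr (b - 1)) has_integral Beta 2 b) {0<..<1}"
    using has_integral_Beta_real[of 2 b] b by (simp add: has_integral_Icc_iff_Ioo)
  then have hi2: "((\<lambda>x. x powr (2 - 1) * (1 - x) powr (b - 1) / Beta 2 b) has_integral 1) {0<..<1}"
    using has_integral_divide[OF hi, of "Beta 2 b"] B by simp
  have "(\<integral>\<^sup>+x. ennreal (x powr (2 - 1) * (1 - x) powr (b - 1) / Beta 2 b) * indicator {0<..<1} x \<partial>lborel) = ennreal 1"
    by (rule nn_integral_has_integral_lebesgue'[OF _ hi2]) (use B in auto)
  moreover have "(\<lambda>x. ennreal (bdens b x)) = (\<lambda>x. ennreal (x powr (2 - 1) * (1 - x) powr (b - 1) / Beta 2 b) * indicator {0<..<1} x)"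
    by (auto simp: bdens_def indicator_def fun_eq_iff)
  ultimately have "(\<integral>\<^sup>+x. ennreal (bdens b x) \<partial>lborel) = 1" by simp
  then show "emeasure (beta_measure 2 b) (space (beta_measure 2 b)) = 1"
    unfolding beta_measure_2 by (simp add: emeasure_density) 
qed

lemma beta_box_lower:
  assumes b: "b \<ge> 1" and a: "0 < a" "a < c" "c < 1" and N: "b - 1 \<le> real N"
  shows "emeasure (beta_measure 2 b) {a..c} \<ge> ennreal ((c - a) * (a * (1 - c) ^ N))"
proof -
  have "ennreal ((c - a) * (a * (1 - c) ^ N)) = (\<integral>\<^sup>+x. ennreal (a * (1 - c) ^ N) * indicator {a..c} x \<partial>lborel)"
    using a by (subst nn_integral_cmult_indicator) (auto simp: ennreal_mult' mult.commute)
  also have "\<dots> \<le> (\<integral>\<^sup>+x. ennreal (bdens b x) * indicator {a..c} x \<partial>lborel)"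
  proof (rule nn_integral_mono)
    fix x
    show "ennreal (a * (1 - c) ^ N) * indicator {a..c} x \<le> ennreal (bdens b x) * indicator {a..c} x"
    proof (cases "x \<in> {a..c}")
      case True
      then have x: "a \<le> x" "x \<le> c" by auto
      have p1: "(1 - c) ^ N = (1 - c) powr N" using a by (simp add: powr_realpow)
      have p2: "(1 - c) powr N \<le> (1 - x) powr N" using x a by (intro powr_mono2) auto
      have p3: "(1 - x) powr N \<le> (1 - x) powr (b - 1)" using x a N by (intro powr_mono') auto
      have p40: "1 * 1 \<le> b * (b + 1)" using b by (intro mult_mono) auto
      then have p4: "1 \<le> b * (b + 1)" by simp
      have "a * (1 - c) ^ N \<le> x * (1 - x) powr (b - 1)"
        using p1 p2 p3 x a by (intro mult_mono) auto
      also have "\<dots> \<le> x * (1 - x) powr (b - 1) * (b * (b + 1))"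
      proof -
        have "0 \<le> x * (1 - x) powr (b - 1)" using x a by simp
        from mult_left_mono[OF p4 this] show ?thesis by simp
      qed
      finally show ?thesis using True x a b by (simp add: bdens_in)
    qed simp
  qed
  also have "\<dots> = emeasure (beta_measure 2 b) {a..c}"
    unfolding beta_measure_2 by (subst emeasure_density) auto
  finally show ?thesis .
qed

lemma beta_moment:
  assumes b: "b \<ge> 1" and l: "real l \<le> b - 1"
  shows "(\<integral>\<^sup>+x. (if x < 1 then ennreal (1 / (1 - x) ^ l) else \<top>) \<partial>beta_measure 2 b) \<le> ennreal (b * (b + 1))"
proof -
  have "(\<integral>\<^sup>+x. (if x < 1 then ennreal (1 / (1 - x) ^ l) else \<top>) \<partial>beta_measure 2 b)
      = (\<integral>\<^sup>+x. ennreal (bdens b x) * (if x < 1 then ennreal (1 / (1 - x) ^ l) else \<top>) \<partial>lborel)"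
    unfolding beta_measure_2 by (subst nn_integral_density) auto
  also have "\<dots> \<le> (\<integral>\<^sup>+x. ennreal (b * (b + 1)) * indicator {0<..<1::real} x \<partial>lborel)"
  proof (rule nn_integral_mono)
    fix x
    show "ennreal (bdens b x) * (if x < 1 then ennreal (1 / (1 - x) ^ l) else \<top>) \<le> ennreal (b * (b + 1)) * indicator {0<..<1} x"
    proof (cases "0 < x \<and> x < 1")
      case True
      have e: "(1 - x) powr (b - 1) = (1 - x) powr (b - 1 - l) * (1 - x) ^ l"
        using True by (simp add: powr_diff powr_realpow)
      have q: "(1 - x) powr (b - 1 - l) \<le> 1" using True l by (intro powr_le1) auto
      have "bdens b x * (1 / (1 - x) ^ l) = x * (1 - x) powr (b - 1 - l) * (b * (b + 1))"
        using True b by (simp add: bdens_in e)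
      also have "\<dots> \<le> 1 * 1 * (b * (b + 1))"
        using True q b by (intro mult_right_mono mult_mono) auto
      finally have "bdens b x * (1 / (1 - x) ^ l) \<le> b * (b + 1)" by simp
      then show ?thesis using True b bdens_nonneg[of b x]
        by (simp add: ennreal_mult'[symmetric] indicator_def)
    qed (simp add: bdens_out indicator_def)
  qed
  also have "\<dots> = ennreal (b * (b + 1))" by (subst nn_integral_cmult_indicator) auto
  finally show ?thesis .
qed



lemma sum_stick: fixes v :: "nat \<Rightarrow> real" and n :: nat shows "(\<Sum>j<n. (\<Prod>l<j. 1 - v l) * v j) = 1 - (\<Prod>l<n. 1 - (v l :: real))"
  by (induction n) (auto simp: algebra_simps)

lemma one_minus_sum_Yvec: fixes v :: "nat \<Rightarrow> real" and r :: nat shows "1 - (\<Sum>j<r. Yvec r v j) = (\<Prod>l<r. 1 - v l)"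
  unfolding Yvec_def using sum_stick[of v r] by simp

definition MM :: "nat \<Rightarrow> nat \<Rightarrow> real measure" where
  "MM K j = beta_measure 2 (max 1 (real K - real j - 1))"

lemma stick_space_eq: assumes "K > 0" shows "stick_space K = PiM {..<K-1} (MM K)"
  unfolding stick_space_def MM_def
proof (rule PiM_cong)
  fix j assume "j \<in> {..<K-1}"
  show "beta_measure (real K / real K + 1) ((real K - real (j + 1)) * (real K / real K)) =
        beta_measure 2 (max 1 (real K - real j - 1))"
  proof -
    have "j + 2 \<le> K" using \<open>j \<in> {..<K-1}\<close> by auto
    then have "real (j + 2) \<le> real K" by (simp only: of_nat_le_iff)
    then have "real j + 2 \<le> real K" by simp
    then show ?thesis using assms by (simp add: max_def algebra_simps)
  qed
qed simp

lemma MM_prob: "prob_space (MM K j)"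
  unfolding MM_def by (rule beta_prob) simp

lemma space_MM[simp]: "space (MM K j) = UNIV"
  by (simp add: MM_def beta_measure_def)

lemma sets_MM[simp]: "sets (MM K j) = sets borel"
  by (simp add: MM_def beta_measure_def)

lemma MM_psf: "product_sigma_finite (MM K)"
  by (simp add: product_sigma_finite_def MM_prob prob_space_imp_sigma_finite)

lemma MM_PiM_prob: "prob_space (PiM I (MM K))"
  by (simp add: MM_prob prob_space_PiM)

lemma comp_meas:
  assumes "j < K - 1"
  shows "(\<lambda>v. v j) \<in> borel_measurable (PiM {..<K-1} (MM K))"
proof -
  have "(\<lambda>v. v j) \<in> measurable (PiM {..<K-1} (MM K)) (MM K j)"
    using assms by (intro measurable_component_singleton) auto
  then show ?thesis by (subst (asm) measurable_cong_sets[OF refl sets_MM])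
qed

lemma prodW_meas:
  assumes "r < K - 1"
  shows "(\<lambda>v. \<Prod>l<r. 1 - v l) \<in> borel_measurable (PiM {..<K-1} (MM K))"
  by (rule borel_measurable_prod) (use assms comp_meas in auto)

lemma Yvec_meas:
  assumes "r < K - 1"
  shows "Yvec r \<in> borel_measurable (PiM {..<K-1} (MM K))"
proof (rule measurable_coordinatewise_then_product)
  fix i
  show "(\<lambda>x. Yvec r x i) \<in> borel_measurable (PiM {..<K-1} (MM K))"
  proof (cases "i < r")
    case True
    have "(\<lambda>x. (\<Prod>l<i. 1 - x l) * x i) \<in> borel_measurable (PiM {..<K-1} (MM K))"
      using True assms by (intro borel_measurable_times prodW_meas comp_meas) auto
    then show ?thesis unfolding Yvec_def using True by simp
  qed (simp add: Yvec_def)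
qed



lemma prod_if_lt:
  fixes r n :: nat
  assumes "r \<le> n"
  shows "(\<Prod>j\<in>{..<n}. if j < r then f j else 1) = (\<Prod>j<r. f j :: 'a::comm_monoid_mult)"
proof -
  have "{..<n} \<inter> {j. j < r} = {..<r}" using assms by auto
  then show ?thesis by (simp add: prod.If_cases)
qed

lemma UB:
  assumes K: "r + 2 \<le> K" and s: "s > 0"
  shows "measure (PiM {..<K-1} (MM K)) {v \<in> space (PiM {..<K-1} (MM K)). (\<Prod>l<r. 1 - v l) \<le> s}
           \<le> s ^ (K - r - 1) * (real K * (real K + 1)) ^ r"
proof -
  let ?P = "PiM {..<K-1} (MM K)"
  interpret MMp: product_sigma_finite "MM K" by (rule MM_psf)
  interpret P: prob_space ?P by (rule MM_PiM_prob)
  let ?I = "{..<K-1}"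
  define lam where "lam = K - r - 1"
  define g where "g x = (if x < 1 then ennreal (1 / (1 - x) ^ lam) else \<top>)" for x :: real
  define f where "f j = (if j < r then g else (\<lambda>_. 1))" for j
  define A where "A = {v \<in> space ?P. (\<Prod>l<r. 1 - v l) \<le> s}"
  have rK: "r < K - 1" using K by simp
  note pm[measurable] = prodW_meas[OF rK]
  have Am: "A \<in> sets ?P" unfolding A_def by measurable
  have gm: "g \<in> borel_measurable borel" unfolding g_def by measurable
  have fm: "f j \<in> borel_measurable (MM K j)" for j
  proof -
    have "f j \<in> borel_measurable borel" unfolding f_def using gm by auto
    then show ?thesis by (subst measurable_cong_sets[OF sets_MM refl])
  qed
  have fcm: "(\<lambda>v. f j (v j)) \<in> borel_measurable ?P" if "j \<in> ?I" for j
  proof -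
    have "(\<lambda>v. v j) \<in> measurable ?P (MM K j)" using that by (rule measurable_component_singleton)
    from measurable_compose[OF this fm] show ?thesis .
  qed
  have prodf: "(\<Prod>j\<in>?I. f j (v j)) = (\<Prod>j<r. g (v j))" for v
  proof -
    have "f j (v j) = (if j < r then g (v j) else 1)" for j by (simp add: f_def)
    then show ?thesis using prod_if_lt[of r "K-1" "\<lambda>j. g (v j)"] rK by simp
  qed
  have pw: "indicator A v \<le> ennreal (s ^ lam) * (\<Prod>j\<in>?I. f j (v j))" for v
  proof (cases "v \<in> A")
    case True
    then have vs: "(\<Prod>l<r. 1 - v l) \<le> s" by (simp add: A_def)
    show ?thesis
    proof (cases "\<forall>j<r. v j < 1")
      case True
      have pos: "0 < (\<Prod>l<r. 1 - v l)" using True by (intro prod_pos) auto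
      have "(\<Prod>j<r. g (v j)) = (\<Prod>j<r. ennreal (1 / (1 - v j) ^ lam))"
        using True by (intro prod.cong) (auto simp: g_def)
      also have "\<dots> = ennreal (\<Prod>j<r. 1 / (1 - v j) ^ lam)"
        using True by (intro prod_ennreal) auto
      also have "(\<Prod>j<r. 1 / (1 - v j) ^ lam) = 1 / (\<Prod>j<r. 1 - v j) ^ lam"
        by (simp add: prod_dividef prod_power_distrib)
      finally have e: "(\<Prod>j<r. g (v j)) = ennreal (1 / (\<Prod>j<r. 1 - v j) ^ lam)" .
      have le: "(\<Prod>j<r. 1 - v j) ^ lam \<le> s ^ lam" using vs pos by (intro power_mono) auto
      have "1 \<le> s ^ lam * (1 / (\<Prod>j<r. 1 - v j) ^ lam)"
        using le pos by (simp add: field_simps)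
      then have "ennreal 1 \<le> ennreal (s ^ lam) * ennreal (1 / (\<Prod>j<r. 1 - v j) ^ lam)"
        using s pos by (simp add: ennreal_mult'[symmetric] del: ennreal_1)
      moreover have "indicator A v = (1::ennreal)" using \<open>v \<in> A\<close> by simp
      ultimately show ?thesis unfolding prodf e by simp
    next
      case False
      then obtain j where j: "j < r" "\<not> v j < 1" by auto
      have top: "(\<Prod>j<r. g (v j)) = \<top>"
        unfolding ennreal_prod_eq_top using j by (auto simp: g_def)
      have "indicator A v = (1::ennreal)" using \<open>v \<in> A\<close> by simp
      then show ?thesis unfolding prodf top using s by (simp add: ennreal_mult_top)
    qed
  qed (simp add: indicator_def)
  have "emeasure ?P A = (\<integral>\<^sup>+v. indicator A v \<partial>?P)"
    using Am by simp
  also have "\<dots> \<le> (\<integral>\<^sup>+v. ennreal (s ^ lam) * (\<Prod>j\<in>?I. f j (v j)) \<partial>?P)"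
    by (intro nn_integral_mono pw)
  also have "\<dots> = ennreal (s ^ lam) * (\<integral>\<^sup>+v. (\<Prod>j\<in>?I. f j (v j)) \<partial>?P)"
    by (intro nn_integral_cmult borel_measurable_prod_ennreal fcm)
  also have "(\<integral>\<^sup>+v. (\<Prod>j\<in>?I. f j (v j)) \<partial>?P) = (\<Prod>j\<in>?I. integral\<^sup>N (MM K j) (f j))"
    by (intro MMp.product_nn_integral_prod fm) auto
  also have "\<dots> \<le> (\<Prod>j\<in>?I. if j < r then ennreal (real K * (real K + 1)) else 1)"
  proof (intro prod_mono_ennreal)
    fix j assume "j \<in> ?I"
    show "integral\<^sup>N (MM K j) (f j) \<le> (if j < r then ennreal (real K * (real K + 1)) else 1)"
    proof (cases "j < r")
      case True
      define b where "b = max 1 (real K - real j - 1)"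
      have bK: "b = real K - real j - 1" using K True by (simp add: b_def)
      have "integral\<^sup>N (MM K j) (f j) = (\<integral>\<^sup>+x. (if x < 1 then ennreal (1 / (1 - x) ^ lam) else \<top>) \<partial>beta_measure 2 b)"
        using True by (simp add: f_def g_def[abs_def] MM_def b_def)
      also have "\<dots> \<le> ennreal (b * (b + 1))"
        by (rule beta_moment) (use K True in \<open>auto simp: bK lam_def\<close>)
      also have "\<dots> \<le> ennreal (real K * (real K + 1))"
        using K True by (intro ennreal_leI mult_mono) (auto simp: bK)
      finally show ?thesis using True by simp
    next
      case False
      interpret prob_space "MM K j" by (rule MM_prob)
      show ?thesis using False emeasure_space_1 by (simp add: f_def)
    qed
  qed
  also have "\<dots> = ennreal (real K * (real K + 1)) ^ r"
    using prod_if_lt[of r "K-1" "\<lambda>_. ennreal (real K * (real K + 1))"] rK by simp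
  finally have "emeasure ?P A \<le> ennreal (s ^ lam) * ennreal (real K * (real K + 1)) ^ r"
    by (simp add: mult_left_mono)
  also have "\<dots> = ennreal (s ^ lam) * ennreal ((real K * (real K + 1)) ^ r)"
    by (subst ennreal_power) auto
  also have "\<dots> = ennreal (s ^ lam * (real K * (real K + 1)) ^ r)"
    by (rule ennreal_mult'[symmetric]) (use s in auto)
  finally have "emeasure ?P A \<le> ennreal (s ^ lam * (real K * (real K + 1)) ^ r)" .
  then have "ennreal (measure ?P A) \<le> ennreal (s ^ lam * (real K * (real K + 1)) ^ r)"
    using P.emeasure_eq_measure[of A] by simp
  then have "measure ?P A \<le> s ^ lam * (real K * (real K + 1)) ^ r"
    using s by (simp add: ennreal_le_iff)
  then show ?thesis by (simp only: A_def lam_def)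
qed

lemma LB:
  assumes K: "r + 2 \<le> K" and e: "e > 0" and w: "\<And>j. j < r \<Longrightarrow> 0 \<le> w j \<and> w j + e < 1"
  shows "(\<Prod>j<r. (e / 2) * ((e / 2) * (1 - (w j + e)) ^ K))
     \<le> measure (PiM {..<K-1} (MM K)) {v \<in> space (PiM {..<K-1} (MM K)). \<forall>j<r. w j + e / 2 \<le> v j \<and> v j \<le> w j + e}"
proof -
  let ?P = "PiM {..<K-1} (MM K)"
  interpret MMp: product_sigma_finite "MM K" by (rule MM_psf)
  interpret P: prob_space ?P by (rule MM_PiM_prob)
  let ?I = "{..<K-1}"
  define B where "B j = (if j < r then {w j + e / 2 .. w j + e} else UNIV)" for j
  have rK: "r < K - 1" using K by simp
  have eqs: "{v \<in> space ?P. \<forall>j<r. w j + e / 2 \<le> v j \<and> v j \<le> w j + e} = PiE ?I B"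
  proof (intro set_eqI iffI)
    fix v assume v: "v \<in> {v \<in> space ?P. \<forall>j<r. w j + e / 2 \<le> v j \<and> v j \<le> w j + e}"
    then have "v \<in> PiE ?I (\<lambda>_. UNIV)" by (simp add: space_PiM)
    then show "v \<in> PiE ?I B" using v unfolding PiE_iff B_def by auto
  next
    fix v assume v: "v \<in> PiE ?I B"
    have "w j + e / 2 \<le> v j \<and> v j \<le> w j + e" if j: "j < r" for j
    proof -
      have "j \<in> ?I" using rK j by auto
      then have "v j \<in> B j" using PiE_mem[OF v] by blast
      then show ?thesis using j by (simp add: B_def)
    qed
    then have "\<forall>j<r. w j + e / 2 \<le> v j \<and> v j \<le> w j + e" by blast
    moreover have "v \<in> space ?P" using v unfolding space_PiM PiE_iff by simp
    ultimately show "v \<in> {v \<in> space ?P. \<forall>j<r. w j + e / 2 \<le> v j \<and> v j \<le> w j + e}" by simp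
  qed
  have "emeasure ?P (PiE ?I B) = (\<Prod>j\<in>?I. emeasure (MM K j) (B j))"
    by (intro MMp.emeasure_PiM) (auto simp: B_def)
  also have "\<dots> \<ge> (\<Prod>j\<in>?I. if j < r then ennreal ((e / 2) * ((e / 2) * (1 - (w j + e)) ^ K)) else 1)"
  proof (intro prod_mono_ennreal)
    fix j assume "j \<in> ?I"
    show "(if j < r then ennreal ((e / 2) * ((e / 2) * (1 - (w j + e)) ^ K)) else 1) \<le> emeasure (MM K j) (B j)"
    proof (cases "j < r")
      case True
      have wj: "0 \<le> w j" "w j + e < 1" using w[OF True] by auto
      have "ennreal ((e / 2) * ((e / 2) * (1 - (w j + e)) ^ K))
          \<le> ennreal ((w j + e - (w j + e / 2)) * ((w j + e / 2) * (1 - (w j + e)) ^ K))"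
        using wj e by (intro ennreal_leI mult_mono) auto
      also have "\<dots> \<le> emeasure (MM K j) {w j + e / 2 .. w j + e}"
        unfolding MM_def by (rule beta_box_lower) (use wj e in auto)
      finally show ?thesis using True by (simp add: B_def)
    next
      case False
      interpret prob_space "MM K j" by (rule MM_prob)
      show ?thesis using False by (simp add: B_def emeasure_space_1[simplified])
    qed
  qed
  finally have L1: "(\<Prod>j\<in>?I. if j < r then ennreal ((e / 2) * ((e / 2) * (1 - (w j + e)) ^ K)) else 1) \<le> emeasure ?P (PiE ?I B)" .
  have L2: "(\<Prod>j\<in>?I. if j < r then ennreal ((e / 2) * ((e / 2) * (1 - (w j + e)) ^ K)) else 1)
      = ennreal (\<Prod>j<r. (e / 2) * ((e / 2) * (1 - (w j + e)) ^ K))"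
  proof -
    have nn: "0 \<le> (e / 2) * ((e / 2) * (1 - (w j + e)) ^ K)" if "j \<in> {..<r}" for j
      using w[of j] that e by auto
    have "(\<Prod>j\<in>?I. if j < r then ennreal ((e / 2) * ((e / 2) * (1 - (w j + e)) ^ K)) else 1)
        = (\<Prod>j<r. ennreal ((e / 2) * ((e / 2) * (1 - (w j + e)) ^ K)))"
      by (rule prod_if_lt) (use rK in simp)
    also have "\<dots> = ennreal (\<Prod>j<r. (e / 2) * ((e / 2) * (1 - (w j + e)) ^ K))"
      by (rule prod_ennreal) (rule nn)
    finally show ?thesis .
  qed
  have m: "emeasure ?P (PiE ?I B) = ennreal (measure ?P (PiE ?I B))" by (rule P.emeasure_eq_measure)
  have "ennreal (\<Prod>j<r. (e / 2) * ((e / 2) * (1 - (w j + e)) ^ K)) \<le> ennreal (measure ?P (PiE ?I B))"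
    using L1 unfolding L2 m .
  then have "(\<Prod>j<r. (e / 2) * ((e / 2) * (1 - (w j + e)) ^ K)) \<le> measure ?P (PiE ?I B)"
    using ennreal_le_iff[OF measure_nonneg] by blast
  then show ?thesis using eqs by simp
qed



lemma Ylaw_measure:
  assumes K: "r + 2 \<le> K" and G: "G \<in> sets borel"
  shows "measure (Ylaw r K) G = measure (PiM {..<K-1} (MM K)) (Yvec r -` G \<inter> space (PiM {..<K-1} (MM K)))"
proof -
  have "K > 0" using K by simp
  then have "Ylaw r K = distr (PiM {..<K-1} (MM K)) borel (Yvec r)"
    unfolding Ylaw_def by (simp add: stick_space_eq)
  moreover have "Yvec r \<in> borel_measurable (PiM {..<K-1} (MM K))"
    by (rule Yvec_meas) (use K in simp)
  ultimately show ?thesis using G by (simp add: measure_distr)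
qed

lemma Yvec_Delta:
  assumes "\<And>j. j < r \<Longrightarrow> 0 \<le> v j \<and> v j \<le> 1"
  shows "Yvec r v \<in> Delta r"
proof -
  have "0 \<le> Yvec r v j" if "j < r" for j
    unfolding Yvec_def using that assms by (auto intro!: mult_nonneg_nonneg prod_nonneg)
  moreover have "0 \<le> (\<Prod>l<r. 1 - v l)" using assms by (auto intro!: prod_nonneg)
  then have "(\<Sum>j<r. Yvec r v j) \<le> 1" using one_minus_sum_Yvec[of r v] by linarith
  ultimately show ?thesis unfolding Delta_def by (auto simp: Yvec_def)
qed

lemma Delta_sum: "y \<in> Delta r \<Longrightarrow> 0 \<le> (\<Sum>j<r. y j) \<and> (\<Sum>j<r. y j) \<le> 1"
  unfolding Delta_def by (auto intro!: sum_nonneg)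

lemma rate_nonneg: assumes "y \<in> Delta r" shows "0 \<le> S_rate r y"
proof -
  have s: "0 \<le> (\<Sum>j<r. y j)" using Delta_sum[OF assms] by simp
  show ?thesis
  proof (cases "(\<Sum>j<r. y j) < 1")
    case True
    then have "1 \<le> 1 / (1 - (\<Sum>j<r. y j))" using s by (simp add: field_simps)
    then show ?thesis using True by (simp add: S_rate_def)
  qed (simp add: S_rate_def)
qed

lemma rate_le_iff:
  assumes "y \<in> Delta r"
  shows "S_rate r y \<le> ereal c \<longleftrightarrow> (\<Sum>j<r. y j) \<le> 1 - exp (- c)"
proof (cases "(\<Sum>j<r. y j) < 1")
  case True
  let ?s = "\<Sum>j<r. y j"
  have p: "0 < 1 - ?s" using True by simp
  have "S_rate r y \<le> ereal c \<longleftrightarrow> ln (1 / (1 - ?s)) \<le> c" using True by (simp add: S_rate_def)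
  also have "\<dots> \<longleftrightarrow> - ln (1 - ?s) \<le> c" using p by (simp add: ln_div)
  also have "\<dots> \<longleftrightarrow> - c \<le> ln (1 - ?s)" by linarith
  also have "\<dots> \<longleftrightarrow> exp (- c) \<le> 1 - ?s" using p by (simp add: ln_ge_iff)
  also have "\<dots> \<longleftrightarrow> ?s \<le> 1 - exp (- c)" by linarith
  finally show ?thesis .
next
  case False
  have "0 < exp (- c)" by simp
  then have "\<not> (\<Sum>j<r. y j) \<le> 1 - exp (- c)" using False by linarith
  then show ?thesis using False by (simp add: S_rate_def)
qed

lemma rate_ge:
  assumes "y \<in> Delta r" "ereal c \<le> S_rate r y"
  shows "1 - (\<Sum>j<r. y j) \<le> exp (- c)"
proof (cases "(\<Sum>j<r. y j) < 1")
  case True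
  let ?s = "\<Sum>j<r. y j"
  have p: "0 < 1 - ?s" using True by simp
  have "c \<le> ln (1 / (1 - ?s))" using True assms(2) by (simp add: S_rate_def)
  then have "c \<le> - ln (1 - ?s)" using p by (simp add: ln_div)
  then have "ln (1 - ?s) \<le> - c" by linarith
  then show ?thesis using p by (metis exp_le_cancel_iff exp_ln)
next
  case False
  have "0 < exp (- c)" by simp
  then show ?thesis using False by linarith
qed

lemma rate_top: "S_rate r y = \<infinity> \<Longrightarrow> 1 - (\<Sum>j<r. y j) \<le> 0"
  by (cases "(\<Sum>j<r. y j) < 1") (auto simp: S_rate_def)

lemma ln_sum_limit: "(\<lambda>K. ln (real K * (real K + 1)) / real K) \<longlonglongrightarrow> 0"
  by real_asymp

lemma frac_limit: "(\<lambda>K. (real K - a) / real K) \<longlonglongrightarrow> 1"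
  by real_asymp


lemma upper_main:
  assumes G: "G \<in> sets borel" "G \<subseteq> Delta r"
  shows "limsup (\<lambda>K. scaled_log_prob (real K) (Ylaw r K) G) \<le> - (INF x\<in>G. S_rate r x)"
proof -
  define c where "c = (INF x\<in>G. S_rate r x)"
  have c0: "0 \<le> c" unfolding c_def using G rate_nonneg by (auto intro!: INF_greatest)
  have cle: "c \<le> S_rate r y" if "y \<in> G" for y unfolding c_def using that by (rule INF_lower)
  define C where "C K = (real K * (real K + 1)) ^ r" for K :: nat
  have bound: "measure (Ylaw r K) G \<le> s ^ (K - r - 1) * C K"
    if K: "r + 2 \<le> K" and s: "s > 0" and H: "\<forall>y\<in>G. 1 - (\<Sum>j<r. y j) \<le> s" for K s
  proof -
    let ?P = "PiM {..<K-1} (MM K)"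
    interpret P: prob_space ?P by (rule MM_PiM_prob)
    have rK: "r < K - 1" using K by simp
    note pm[measurable] = prodW_meas[OF rK]
    have "measure (Ylaw r K) G = measure ?P (Yvec r -` G \<inter> space ?P)" by (rule Ylaw_measure[OF K G(1)])
    also have "\<dots> \<le> measure ?P {v \<in> space ?P. (\<Prod>l<r. 1 - v l) \<le> s}"
    proof (rule P.finite_measure_mono)
      show "Yvec r -` G \<inter> space ?P \<subseteq> {v \<in> space ?P. (\<Prod>l<r. 1 - v l) \<le> s}"
      proof
        fix v assume v: "v \<in> Yvec r -` G \<inter> space ?P"
        then have "1 - (\<Sum>j<r. Yvec r v j) \<le> s" using H by auto
        then show "v \<in> {v \<in> space ?P. (\<Prod>l<r. 1 - v l) \<le> s}" using v by (simp add: one_minus_sum_Yvec)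
      qed
      show "{v \<in> space ?P. (\<Prod>l<r. 1 - v l) \<le> s} \<in> sets ?P" by measurable
    qed
    also have "\<dots> \<le> s ^ (K - r - 1) * C K" unfolding C_def by (rule UB[OF K s])
    finally show ?thesis .
  qed
  have CK: "C K > 0" if "r + 2 \<le> K" for K using that by (simp add: C_def)
  show ?thesis
  proof (cases "c = \<infinity>")
    case True
    have H0: "\<forall>y\<in>G. 1 - (\<Sum>j<r. y j) \<le> 0"
    proof
      fix y assume "y \<in> G"
      then have "S_rate r y = \<infinity>" using cle[of y] True by simp
      then show "1 - (\<Sum>j<r. y j) \<le> 0" by (rule rate_top)
    qed
    have zero: "measure (Ylaw r K) G = 0" if K: "r + 2 \<le> K" for K
    proof (rule ccontr)
      let ?m = "measure (Ylaw r K) G"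
      assume "?m \<noteq> 0"
      then have mpos: "?m > 0" using measure_nonneg[of "Ylaw r K" G] by linarith
      have CKp: "C K > 0" using CK[OF K] .
      define s where "s = min 1 (?m / (2 * C K))"
      have s0: "s > 0" using mpos CKp by (simp add: s_def)
      have s1: "s \<le> 1" by (simp add: s_def)
      have s2: "s \<le> ?m / (2 * C K)" by (simp add: s_def)
      have H: "\<forall>y\<in>G. 1 - (\<Sum>j<r. y j) \<le> s" using H0 s0 by force
      have "?m \<le> s ^ (K - r - 1) * C K" by (rule bound[OF K s0 H])
      also have "\<dots> \<le> s ^ 1 * C K"
        using s0 s1 K CKp by (intro mult_right_mono power_decreasing) auto
      also have "\<dots> \<le> ?m / (2 * C K) * C K" using s2 CKp by (intro mult_right_mono) auto
      also have "\<dots> = ?m / 2" using CKp by simp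
      finally show False using mpos by simp
    qed
    have "eventually (\<lambda>K. scaled_log_prob (real K) (Ylaw r K) G \<le> -\<infinity>) sequentially"
      unfolding eventually_sequentially
      by (intro exI[of _ "r + 2"] allI impI) (simp add: scaled_log_prob_def zero)
    then have "limsup (\<lambda>K. scaled_log_prob (real K) (Ylaw r K) G) \<le> limsup (\<lambda>K. -\<infinity>::ereal)"
      by (rule Limsup_mono)
    then show ?thesis by (simp add: Limsup_const)
  next
    case False
    then obtain c' where c': "c = ereal c'" using c0 by (cases c) auto
    define t where "t = exp (- c')"
    have t0: "t > 0" by (simp add: t_def)
    have H: "\<forall>y\<in>G. 1 - (\<Sum>j<r. y j) \<le> t"
    proof
      fix y assume y: "y \<in> G"
      show "1 - (\<Sum>j<r. y j) \<le> t" unfolding t_def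
        by (rule rate_ge) (use y G cle[OF y] c' in auto)
    qed
    define g where "g K = (real K - (real r + 1)) / real K * ln t + real r * (ln (real K * (real K + 1)) / real K)" for K :: nat
    have ev: "eventually (\<lambda>K. scaled_log_prob (real K) (Ylaw r K) G \<le> ereal (g K)) sequentially"
      unfolding eventually_sequentially
    proof (intro exI[of _ "r + 2"] allI impI)
      fix K assume K: "r + 2 \<le> K"
      let ?m = "measure (Ylaw r K) G"
      show "scaled_log_prob (real K) (Ylaw r K) G \<le> ereal (g K)"
      proof (cases "?m = 0")
        case True then show ?thesis by (simp add: scaled_log_prob_def)
      next
        case False
        then have mpos: "?m > 0" using measure_nonneg[of "Ylaw r K" G] by linarith
        have CKp: "C K > 0" using CK[OF K] .
        have Kp: "real K > 0" using K by simp
        have "?m \<le> t ^ (K - r - 1) * C K" by (rule bound[OF K t0 H])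
        then have "ln ?m \<le> ln (t ^ (K - r - 1) * C K)" using mpos t0 CKp by simp
        also have "\<dots> = real (K - r - 1) * ln t + real r * ln (real K * (real K + 1))"
          using t0 CKp Kp by (simp add: ln_mult ln_realpow C_def)
        also have "real (K - r - 1) = real K - (real r + 1)" using K by simp
        finally have l: "ln ?m \<le> (real K - (real r + 1)) * ln t + real r * ln (real K * (real K + 1))" .
        have "ln ?m / real K \<le> ((real K - (real r + 1)) * ln t + real r * ln (real K * (real K + 1))) / real K"
          using l Kp by (intro divide_right_mono) auto
        also have "\<dots> = g K" using Kp by (simp add: g_def add_divide_distrib)
        finally show ?thesis using False by (simp add: scaled_log_prob_def)
      qed
    qed
    have "(\<lambda>K. g K) \<longlonglongrightarrow> 1 * ln t + real r * 0"
      unfolding g_def by (intro tendsto_intros frac_limit ln_sum_limit)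
    then have gl: "(\<lambda>K. ereal (g K)) \<longlonglongrightarrow> ereal (ln t)" by (intro tendsto_ereal) simp
    have "limsup (\<lambda>K. scaled_log_prob (real K) (Ylaw r K) G) \<le> limsup (\<lambda>K. ereal (g K))"
      by (rule Limsup_mono[OF ev])
    also have "\<dots> = ereal (ln t)" by (rule lim_imp_Limsup[OF _ gl]) simp
    also have "\<dots> = - c" by (simp add: t_def c')
    finally show ?thesis by (simp add: c_def)
  qed
qed



lemma stick_inverse:
  fixes y :: "nat \<Rightarrow> real"
  assumes y0: "\<And>j. j < r \<Longrightarrow> 0 \<le> y j" and y1: "(\<Sum>j<r. y j) < 1"
  defines "w \<equiv> \<lambda>j. y j / (1 - (\<Sum>l<j. y l))"
  shows "\<And>j. j < r \<Longrightarrow> 0 \<le> w j \<and> w j < 1"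
    and "\<And>j. j \<le> r \<Longrightarrow> (\<Prod>l<j. 1 - w l) = 1 - (\<Sum>l<j. y l)"
    and "\<And>j. j < r \<Longrightarrow> Yvec r w j = y j"
proof -
  have ps: "(\<Sum>l<j. y l) < 1" if "j \<le> r" for j
  proof -
    have "(\<Sum>l<j. y l) \<le> (\<Sum>l<r. y l)"
      using that y0 by (intro sum_mono2) auto
    then show ?thesis using y1 by linarith
  qed
  have ps2: "(\<Sum>l<j. y l) + y j < 1" if "j < r" for j
    using ps[of "Suc j"] that by simp
  show w01: "0 \<le> w j \<and> w j < 1" if "j < r" for j
  proof -
    have p: "0 < 1 - (\<Sum>l<j. y l)" using ps[of j] that by simp
    have "y j < 1 - (\<Sum>l<j. y l)" using ps2[OF that] by linarith
    then show ?thesis using p y0[OF that] by (simp add: w_def divide_less_eq)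
  qed
  show prodw: "(\<Prod>l<j. 1 - w l) = 1 - (\<Sum>l<j. y l)" if "j \<le> r" for j
    using that
  proof (induction j)
    case 0 then show ?case by simp
  next
    case (Suc j)
    then have jr: "j < r" by simp
    have p: "0 < 1 - (\<Sum>l<j. y l)" using ps[of j] jr by simp
    have "(\<Prod>l<Suc j. 1 - w l) = (1 - (\<Sum>l<j. y l)) * (1 - w j)" using Suc by simp
    also have "\<dots> = 1 - (\<Sum>l<j. y l) - y j" using p by (simp add: w_def field_simps)
    finally show ?case by simp
  qed
  show "Yvec r w j = y j" if "j < r" for j
  proof -
    have p: "0 < 1 - (\<Sum>l<j. y l)" using ps[of j] that by simp
    have "Yvec r w j = (1 - (\<Sum>l<j. y l)) * w j" using that prodw[of j] by (simp add: Yvec_def)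
    also have "\<dots> = y j" using p by (simp add: w_def)
    finally show ?thesis .
  qed
qed

lemma nbhd:
  assumes U: "open U" "y \<in> U" and yD: "y \<in> Delta r" and wy: "\<And>j. j < r \<Longrightarrow> Yvec r w j = y j"
  shows "\<exists>d>0. \<forall>v. (\<forall>j<r. \<bar>v j - w j\<bar> < d) \<longrightarrow> Yvec r v \<in> U"
proof (rule ccontr)
  assume neg: "\<not> ?thesis"
  have "openin (product_topology (\<lambda>i. euclidean) UNIV) U" using U(1) unfolding open_fun_def .
  from product_topology_open_contains_basis[OF this U(2)]
  obtain X where Xall: "y \<in> (\<Pi>\<^sub>E i\<in>UNIV. X i) \<and> (\<forall>i. openin euclidean (X i)) \<and> finite {i. X i \<noteq> topspace euclidean} \<and> (\<Pi>\<^sub>E i\<in>UNIV. X i) \<subseteq> U"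
    by (rule exE)
  have X1: "y \<in> (\<Pi>\<^sub>E i\<in>UNIV. X i)" using Xall by (elim conjE)
  have X2: "\<forall>i. openin euclidean (X i)" using Xall by (elim conjE)
  have X3: "(\<Pi>\<^sub>E i\<in>UNIV. X i) \<subseteq> U" using Xall by (elim conjE)
  have Xo: "open (X i)" for i using X2 by (simp only: open_openin)
  have yX: "y i \<in> X i" for i using X1 by (auto simp: PiE_iff)
  have "\<forall>n. \<exists>v. (\<forall>j<r. \<bar>v j - w j\<bar> < inverse (real (Suc n))) \<and> Yvec r v \<notin> U"
  proof
    fix n
    have "inverse (real (Suc n)) > 0" by simp
    then show "\<exists>v. (\<forall>j<r. \<bar>v j - w j\<bar> < inverse (real (Suc n))) \<and> Yvec r v \<notin> U"
      using neg by blast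
  qed
  then obtain vs where vs: "\<And>n j. j < r \<Longrightarrow> \<bar>vs n j - w j\<bar> < inverse (real (Suc n))" "\<And>n. Yvec r (vs n) \<notin> U"
    by metis
  have conv: "(\<lambda>n. vs n l) \<longlonglongrightarrow> w l" if l: "l < r" for l
  proof (rule LIMSEQ_I)
    fix e :: real assume e: "0 < e"
    obtain N where N: "inverse (real (Suc N)) < e" using reals_Archimedean[OF e] by blast
    show "\<exists>no. \<forall>n\<ge>no. norm (vs n l - w l) < e"
    proof (intro exI allI impI)
      fix n assume n: "N \<le> n"
      have "inverse (real (Suc n)) \<le> inverse (real (Suc N))" using n by (simp add: field_simps)
      then show "norm (vs n l - w l) < e" using vs(1)[OF l, of n] N unfolding real_norm_def by linarith
    qed
  qed
  have evj: "eventually (\<lambda>n. Yvec r (vs n) j \<in> X j) sequentially" if j: "j \<in> {..<r}" for j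
  proof -
    have "(\<lambda>n. (\<Prod>l<j. 1 - vs n l) * vs n j) \<longlonglongrightarrow> (\<Prod>l<j. 1 - w l) * w j"
      using j by (intro tendsto_intros conv) auto
    moreover have "(\<Prod>l<j. 1 - w l) * w j = y j" using wy[of j] j by (simp add: Yvec_def)
    ultimately have "(\<lambda>n. Yvec r (vs n) j) \<longlonglongrightarrow> y j" using j by (simp add: Yvec_def)
    then show ?thesis using Xo yX by (rule topological_tendstoD)
  qed
  have "eventually (\<lambda>n. \<forall>j\<in>{..<r}. Yvec r (vs n) j \<in> X j) sequentially"
    by (rule eventually_ball_finite) (use evj in auto)
  then obtain N where N: "\<forall>j\<in>{..<r}. Yvec r (vs N) j \<in> X j"
    by (auto simp: eventually_sequentially)
  have "Yvec r (vs N) \<in> (\<Pi>\<^sub>E i\<in>UNIV. X i)"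
  proof -
    have "Yvec r (vs N) i \<in> X i" for i
    proof (cases "i < r")
      case True then show ?thesis using N by auto
    next
      case False
      then have "y i = 0" using yD by (simp add: Delta_def)
      then show ?thesis using yX[of i] False by (simp add: Yvec_def)
    qed
    then show ?thesis by (auto simp: PiE_iff)
  qed
  then show False using X3 vs(2)[of N] by blast
qed


lemma lower_main:
  assumes G: "G \<in> sets borel" "G \<subseteq> Delta r" and y: "y \<in> (top_of_set (Delta r)) interior_of G"
  shows "- S_rate r y \<le> liminf (\<lambda>K. scaled_log_prob (real K) (Ylaw r K) G)"
proof -
  let ?L = "liminf (\<lambda>K. scaled_log_prob (real K) (Ylaw r K) G)"
  have yD: "y \<in> Delta r" using y interior_of_subset_topspace[of "top_of_set (Delta r)" G] by auto
  obtain T where T: "openin (top_of_set (Delta r)) T" "y \<in> T" "T \<subseteq> G"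
    using y unfolding interior_of_def by blast
  obtain U where U: "open U" "T = Delta r \<inter> U" using T(1) unfolding openin_open by blast
  have yU: "y \<in> U" using T(2) U(2) by blast
  show ?thesis
  proof (cases "(\<Sum>j<r. y j) < 1")
    case False
    then show ?thesis by (simp add: S_rate_def)
  next
    case True
    have y0: "\<And>j. j < r \<Longrightarrow> 0 \<le> y j" using yD by (simp add: Delta_def)
    define w where "w = (\<lambda>j. y j / (1 - (\<Sum>l<j. y l)))"
    have w01: "\<And>j. j < r \<Longrightarrow> 0 \<le> w j \<and> w j < 1"
      using stick_inverse(1)[OF y0 True] unfolding w_def by blast
    have wprod: "(\<Prod>l<r. 1 - w l) = 1 - (\<Sum>l<r. y l)"
      using stick_inverse(2)[OF y0 True, of r] unfolding w_def by blast
    have wy: "\<And>j. j < r \<Longrightarrow> Yvec r w j = y j"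
      using stick_inverse(3)[OF y0 True] unfolding w_def by blast
    obtain d where d: "d > 0" "\<And>v. (\<forall>j<r. \<bar>v j - w j\<bar> < d) \<Longrightarrow> Yvec r v \<in> U"
      using nbhd[OF U(1) yU yD wy] by blast
    define L where "L e = (\<Sum>j<r. ln (1 - (w j + e)))" for e
    have key: "ereal (L e) \<le> ?L" if e: "0 < e" "e < d" "\<And>j. j < r \<Longrightarrow> w j + e < 1" for e
    proof -
      define Q where "Q K = (\<Prod>j<r. (e / 2) * ((e / 2) * (1 - (w j + e)) ^ K))" for K :: nat
      have Qpos: "Q K > 0" for K
        unfolding Q_def using e by (intro prod_pos) auto
      have lnQ: "ln (Q K) = real r * (2 * ln (e / 2)) + real K * L e" for K
      proof -
        have "ln (Q K) = (\<Sum>j<r. ln ((e / 2) * ((e / 2) * (1 - (w j + e)) ^ K)))"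
        proof (unfold Q_def, intro ln_prod)
          fix i assume i: "i \<in> {..<r}"
          have "w i + e < 1" using e(3) i by auto
          then show "e / 2 * (e / 2 * (1 - (w i + e)) ^ K) \<noteq> 0" using e(1) by auto
        qed simp
        also have "\<dots> = (\<Sum>j<r. 2 * ln (e / 2) + real K * ln (1 - (w j + e)))"
        proof (intro sum.cong refl)
          fix j assume j: "j \<in> {..<r}"
          have a: "0 < 1 - (w j + e)" using e(3) j by auto
          have b: "0 < e / 2" using e(1) by simp
          have "ln ((e / 2) * ((e / 2) * (1 - (w j + e)) ^ K)) = ln (e / 2) + (ln (e / 2) + ln ((1 - (w j + e)) ^ K))"
            using a b by (simp add: ln_mult del: times_divide_eq_left times_divide_eq_right)
          also have "ln ((1 - (w j + e)) ^ K) = real K * ln (1 - (w j + e))" using a by (simp add: ln_realpow)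
          finally show "ln ((e / 2) * ((e / 2) * (1 - (w j + e)) ^ K)) = 2 * ln (e / 2) + real K * ln (1 - (w j + e))"
            by simp
        qed
        also have "\<dots> = real r * (2 * ln (e / 2)) + real K * L e"
          by (simp add: sum.distrib L_def sum_distrib_left)
        finally show ?thesis .
      qed
      have mge: "Q K \<le> measure (Ylaw r K) G" if K: "r + 2 \<le> K" for K
      proof -
        let ?P = "PiM {..<K-1} (MM K)"
        interpret P: prob_space ?P by (rule MM_PiM_prob)
        have rK: "r < K - 1" using K by simp
        have Q1: "Q K \<le> measure ?P {v \<in> space ?P. \<forall>j<r. w j + e / 2 \<le> v j \<and> v j \<le> w j + e}"
          unfolding Q_def by (rule LB[OF K e(1)]) (use w01 e in auto)
        also have "\<dots> \<le> measure ?P (Yvec r -` G \<inter> space ?P)"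
        proof (rule P.finite_measure_mono)
          show "Yvec r -` G \<inter> space ?P \<in> sets ?P"
            by (rule measurable_sets[OF Yvec_meas[OF rK] G(1)])
          show "{v \<in> space ?P. \<forall>j<r. w j + e / 2 \<le> v j \<and> v j \<le> w j + e} \<subseteq> Yvec r -` G \<inter> space ?P"
          proof
            fix v assume v: "v \<in> {v \<in> space ?P. \<forall>j<r. w j + e / 2 \<le> v j \<and> v j \<le> w j + e}"
            have vb: "w j + e / 2 \<le> v j \<and> v j \<le> w j + e" if "j < r" for j using v that by auto
            have "\<forall>j<r. \<bar>v j - w j\<bar> < d"
            proof (intro allI impI)
              fix j assume j: "j < r"
              show "\<bar>v j - w j\<bar> < d" using vb[OF j] e by auto
            qed
            then have "Yvec r v \<in> U" by (rule d(2))
            moreover have "Yvec r v \<in> Delta r"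
            proof (rule Yvec_Delta)
              fix j assume j: "j < r"
              show "0 \<le> v j \<and> v j \<le> 1" using vb[OF j] w01[OF j] e(1) e(3)[OF j] by auto
            qed
            ultimately have "Yvec r v \<in> G" using U(2) T(3) by blast
            then show "v \<in> Yvec r -` G \<inter> space ?P" using v by auto
          qed
        qed
        also have "\<dots> = measure (Ylaw r K) G" by (rule Ylaw_measure[OF K G(1), symmetric])
        finally show ?thesis .
      qed
      define h where "h K = real r * (2 * ln (e / 2)) / real K + L e" for K :: nat
      have ev: "eventually (\<lambda>K. ereal (h K) \<le> scaled_log_prob (real K) (Ylaw r K) G) sequentially"
        unfolding eventually_sequentially
      proof (intro exI[of _ "r + 2"] allI impI)
        fix K assume K: "r + 2 \<le> K"
        let ?m = "measure (Ylaw r K) G"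
        have Kp: "real K > 0" using K by simp
        have mq: "Q K \<le> ?m" by (rule mge[OF K])
        then have mpos: "?m > 0" using Qpos[of K] by linarith
        have "ln (Q K) \<le> ln ?m" using mq Qpos[of K] by simp
        then have "ln (Q K) / real K \<le> ln ?m / real K" using Kp by (intro divide_right_mono) auto
        moreover have "ln (Q K) / real K = h K" using Kp by (simp add: lnQ h_def add_divide_distrib)
        ultimately show "ereal (h K) \<le> scaled_log_prob (real K) (Ylaw r K) G"
          using mpos by (simp add: scaled_log_prob_def)
      qed
      have "(\<lambda>K. h K) \<longlonglongrightarrow> 0 + L e"
        unfolding h_def by (intro tendsto_intros)
      then have hl: "(\<lambda>K. ereal (h K)) \<longlonglongrightarrow> ereal (L e)" by (intro tendsto_ereal) simp
      have "ereal (L e) = liminf (\<lambda>K. ereal (h K))" by (rule lim_imp_Liminf[OF _ hl, symmetric]) simp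
      also have "\<dots> \<le> ?L" by (rule Liminf_mono[OF ev])
      finally show ?thesis .
    qed
    have evr: "eventually (\<lambda>e. 0 < e \<and> e < d \<and> (\<forall>j\<in>{..<r}. w j + e < 1)) (at_right 0)"
    proof (intro eventually_conj eventually_ball_finite ballI)
      show "eventually (\<lambda>e. 0 < e) (at_right (0::real))" by (rule eventually_at_right_less)
      show "eventually (\<lambda>e. e < d) (at_right (0::real))"
        using eventually_at_right_real[OF d(1)] by eventually_elim auto
      show "finite {..<r}" by simp
      fix j assume j: "j \<in> {..<r}"
      have wj: "0 < 1 - w j" using w01[of j] j by auto
      show "eventually (\<lambda>e. w j + e < 1) (at_right (0::real))"
        using eventually_at_right_real[OF wj] by eventually_elim auto
    qed
    have ev2: "eventually (\<lambda>e. ereal (L e) \<le> ?L) (at_right 0)"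
      using evr by eventually_elim (rule key, auto)
    have "((\<lambda>e. L e) \<longlongrightarrow> L 0) (at_right 0)"
      unfolding L_def by (intro tendsto_intros) (auto dest!: w01)
    then have "((\<lambda>e. ereal (L e)) \<longlongrightarrow> ereal (L 0)) (at_right 0)" by (rule tendsto_ereal)
    then have L0: "ereal (L 0) \<le> ?L"
      by (rule tendsto_upperbound[OF _ ev2]) simp
    have "L 0 = ln (\<Prod>l<r. 1 - w l)"
      unfolding L_def by (subst ln_prod) (auto dest!: w01)
    also have "\<dots> = ln (1 - (\<Sum>l<r. y l))" by (simp add: wprod)
    finally have "- S_rate r y = ereal (L 0)"
      using True by (simp add: S_rate_def ln_div)
    then show ?thesis using L0 by simp
  qed
qed


theorem theorem2p7:
  fixes r :: nat
  assumes "r \<ge> 1"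
  shows "LDP (\<lambda>K. Ylaw r K) (\<lambda>K. real K) (Delta r) (S_rate r)"
  unfolding LDP_def
proof (intro conjI allI impI ballI)
  fix x assume "x \<in> Delta r"
  then show "0 \<le> S_rate r x" by (rule rate_nonneg)
next
  fix c :: real
  have eq: "{x \<in> Delta r. S_rate r x \<le> ereal c} = Delta r \<inter> {y. (\<Sum>j<r. y j) \<le> 1 - exp (- c)}"
    using rate_le_iff by blast
  have "continuous_on UNIV (\<lambda>y::nat \<Rightarrow> real. \<Sum>j<r. y j)"
    by (intro continuous_on_sum) simp
  then have "closed {y::nat \<Rightarrow> real. (\<Sum>j<r. y j) \<le> 1 - exp (- c)}"
    by (intro closed_Collect_le continuous_on_const)
  then show "closedin (top_of_set (Delta r)) {x \<in> Delta r. S_rate r x \<le> ereal c}"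
    unfolding eq by (rule closedin_closed_Int)
next
  fix G :: "(nat \<Rightarrow> real) set"
  assume G: "G \<in> sets borel \<and> G \<subseteq> Delta r"
  have "(SUP x\<in>(top_of_set (Delta r)) interior_of G. - S_rate r x) \<le> liminf (\<lambda>K. scaled_log_prob (real K) (Ylaw r K) G)"
    by (rule SUP_least) (rule lower_main, use G in auto)
  then show "- (INF x\<in>(top_of_set (Delta r)) interior_of G. S_rate r x) \<le> liminf (\<lambda>K. scaled_log_prob (real K) (Ylaw r K) G)"
    by (simp add: ereal_SUP_uminus_eq)
next
  fix G :: "(nat \<Rightarrow> real) set"
  assume G: "G \<in> sets borel \<and> G \<subseteq> Delta r"
  have sub: "G \<subseteq> (top_of_set (Delta r)) closure_of G"
    by (rule closure_of_subset) (use G in simp)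
  have "(INF x\<in>(top_of_set (Delta r)) closure_of G. S_rate r x) \<le> (INF x\<in>G. S_rate r x)"
    by (rule INF_superset_mono[OF sub order_refl])
  then have "- (INF x\<in>G. S_rate r x) \<le> - (INF x\<in>(top_of_set (Delta r)) closure_of G. S_rate r x)"
    by simp
  moreover have "limsup (\<lambda>K. scaled_log_prob (real K) (Ylaw r K) G) \<le> - (INF x\<in>G. S_rate r x)"
    by (rule upper_main) (use G in auto)
  ultimately show "limsup (\<lambda>K. scaled_log_prob (real K) (Ylaw r K) G) \<le> - (INF x\<in>(top_of_set (Delta r)) closure_of G. S_rate r x)"
    by (rule order.trans[rotated])
qed

end
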